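(* Let $n\ge2$, $k\ge2$ and $1\le i\le k-1$. Let $Q$ be the graph with vertex set $\mathbb{Z}_n^i$ in which two distinct words $\boldsymbol\alpha,\boldsymbol\beta\in\mathbb{Z}_n^i$ are adjacent if and only if some vertex of $H_{n,k}$ with prefix $\boldsymbol\alpha$ (first $i$ coordinates equal to $\boldsymbol\alpha$) is adjacent in $H_{n,k}$ to some vertex with prefix $\boldsymbol\beta$. Then $Q$ is equal to (in particular isomorphic to) $H_{n,i}$, i.e., contracting each of the $n^i$ blocks of vertices with a common prefix of length $i$ to a single vertex (and merging multiple edges) yields $H_{n,i}$.
   Context: Let $n\ge 2$ and $k\ge 1$ be integers. $H_{n,k}$ is the simple undirected graph with vertex set $V_{n,k}=\mathbb{Z}_n^k$ (so $|V_{n,k}|=n^k$), whose vertices are written as strings $x_1x_2\ldots x_k$ with $x_j\in\mathbb{Z}_n=\{0,1,\ldots,n-1\}$. Two distinct vertices are adjacent if and only if they are related by one of the following rules. For $i=0$ the prefix $x_1\ldots x_i$ is empty, and "$0\ldots0$" denotes a string of zeros completing the word to length $k$. (R1) $x_1\ldots x_{k-1}x_k\sim x_1\ldots x_{k-1}y_k$ whenever $y_k\neq x_k$. (R2) For $0\le i\le k-2$: $x_1\ldots x_i0\ldots0\sim x_1\ldots x_ix_{i+1}\ldots x_k$ whenever $x_j\neq 0$ for all $i+1\le j\le k$. (R3) For $1\le i\le k-1$: $x_1\ldots x_{i-1}x_i0\ldots0\sim x_1\ldots x_{i-1}y_i0\ldots0$ whenever $x_i,y_i\neq0$ and $x_i\ne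 y_i$. In particular, $H_{n,1}$ is the complete graph $K_n$. *)

theory Defs
  imports Main
begin

definition Hvert :: "nat \<Rightarrow> nat \<Rightarrow> nat list set" where
  "Hvert n k = {xs. length xs = k \<and> (\<forall>x\<in>set xs. x < n)}"

definition R1 :: "nat \<Rightarrow> nat \<Rightarrow> nat list \<Rightarrow> nat list \<Rightarrow> bool" where
  "R1 n k x y \<longleftrightarrow> (\<exists>p a b. length p = k - 1 \<and> x = p @ [a] \<and> y = p @ [b] \<and> a \<noteq> b)"

text \<open>(R2): for 0 <= i <= k-2, p 0...0 ~ p x_{i+1}...x_k with all x_j nonzero
  (stated in one direction; adjacency takes the symmetric closure).\<close>
definition R2 :: "nat \<Rightarrow> nat \<Rightarrow> nat list \<Rightarrow> nat list \<Rightarrow> bool" where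
  "R2 n k x y \<longleftrightarrow> (\<exists>i p ys. i + 2 \<le> k \<and> length p = i \<and> length ys = k - i \<and>
      (\<forall>z\<in>set ys. z \<noteq> 0) \<and> x = p @ replicate (k - i) 0 \<and> y = p @ ys)"

definition R3 :: "nat \<Rightarrow> nat \<Rightarrow> nat list \<Rightarrow> nat list \<Rightarrow> bool" where
  "R3 n k x y \<longleftrightarrow> (\<exists>i p a b. 1 \<le> i \<and> i \<le> k - 1 \<and> length p = i - 1 \<and>
      a \<noteq> 0 \<and> b \<noteq> 0 \<and> a \<noteq> b \<and>
      x = p @ [a] @ replicate (k - i) 0 \<and> y = p @ [b] @ replicate (k - i) 0)"

definition H_adj :: "nat \<Rightarrow> nat \<Rightarrow> nat list \<Rightarrow> nat list \<Rightarrow> bool" where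
  "H_adj n k x y \<longleftrightarrow> x \<in> Hvert n k \<and> y \<in> Hvert n k \<and> x \<noteq> y \<and>
     (R1 n k x y \<or> R2 n k x y \<or> R2 n k y x \<or> R3 n k x y)"

definition Q_adj :: "nat \<Rightarrow> nat \<Rightarrow> nat \<Rightarrow> nat list \<Rightarrow> nat list \<Rightarrow> bool" where
  "Q_adj n k i \<alpha> \<beta> \<longleftrightarrow> \<alpha> \<in> Hvert n i \<and> \<beta> \<in> Hvert n i \<and> \<alpha> \<noteq> \<beta> \<and>
     (\<exists>x y. x \<in> Hvert n k \<and> y \<in> Hvert n k \<and> take i x = \<alpha> \<and> take i y = \<beta> \<and> H_adj n k x y)"

end

theory Submission
  imports Defs
begin

lemma lift:
  assumes "\<alpha> \<in> Hvert n i" "\<beta> \<in> Hvert n i" "\<alpha> \<noteq> \<beta>" "u \<in> Hvert n (k-i)" "v \<in> Hvert n (k-i)"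
    "i \<le> k"
    "R1 n k (\<alpha>@u) (\<beta>@v) \<or> R2 n k (\<alpha>@u) (\<beta>@v) \<or> R2 n k (\<beta>@v) (\<alpha>@u) \<or> R3 n k (\<alpha>@u) (\<beta>@v)"
  shows "Q_adj n k i \<alpha> \<beta>"
proof -
  have l: "length \<alpha> = i" "length \<beta> = i" using assms(1,2) by (auto simp: Hvert_def)
  have m: "\<alpha>@u \<in> Hvert n k" "\<beta>@v \<in> Hvert n k" using assms by (auto simp: Hvert_def)
  have "\<alpha>@u \<noteq> \<beta>@v" using l assms(3) by auto
  then show ?thesis unfolding Q_adj_def H_adj_def using assms m l
    by (intro conjI exI[of _ "\<alpha>@u"] exI[of _ "\<beta>@v"]) auto
qed

lemma bwd:
  assumes n: "n \<ge> 2" and "k \<ge> 2" and i1: "1 \<le> i" and ik: "i \<le> k - 1" and h: "H_adj n i \<alpha> \<beta>"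
  shows "Q_adj n k i \<alpha> \<beta>"
proof -
  define z0 where "z0 = replicate (k-i) (0::nat)"
  define z1 where "z1 = replicate (k-i) (1::nat)"
  have zv: "z0 \<in> Hvert n (k-i)" "z1 \<in> Hvert n (k-i)" using n by (auto simp: Hvert_def z0_def z1_def)
  have a: "\<alpha> \<in> Hvert n i" "\<beta> \<in> Hvert n i" "\<alpha> \<noteq> \<beta>" using h by (auto simp: H_adj_def)
  have ik': "i \<le> k" using ik by simp
  note L = lift[OF a _ _ ik']
  from h have "R1 n i \<alpha> \<beta> \<or> R2 n i \<alpha> \<beta> \<or> R2 n i \<beta> \<alpha> \<or> R3 n i \<alpha> \<beta>" by (simp add: H_adj_def)
  then show ?thesis
  proof (elim disjE)
    assume "R1 n i \<alpha> \<beta>"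
    then obtain p a b where p: "length p = i - 1" "\<alpha> = p @ [a]" "\<beta> = p @ [b]" "a \<noteq> b"
      by (auto simp: R1_def)
    show ?thesis
    proof (cases "a = 0")
      case True
      have "R2 n k (\<alpha>@z0) (\<beta>@(z1))"
        unfolding R2_def
        apply (rule exI[of _ "i-1"], rule exI[of _ p], rule exI[of _ "b # z1"])
        using p True i1 ik by (auto simp: z0_def z1_def replicate_append_same Suc_diff_le
            simp flip: replicate_Suc)
      then show ?thesis using L[OF zv(1) zv(2)] by blast
    next
      case F: False
      show ?thesis
      proof (cases "b = 0")
        case True
        have "R2 n k (\<beta>@z0) (\<alpha>@(z1))"
          unfolding R2_def
          apply (rule exI[of _ "i-1"], rule exI[of _ p], rule exI[of _ "a # z1"])
          using p True F i1 ik by (auto simp: z0_def z1_def Suc_diff_le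
              simp flip: replicate_Suc)
        then show ?thesis using L[OF zv(2) zv(1)] by blast
      next
        case False
        have "R3 n k (\<alpha>@z0) (\<beta>@z0)"
          unfolding R3_def
          apply (rule exI[of _ i], rule exI[of _ p], rule exI[of _ a], rule exI[of _ b])
          using p False F i1 ik by (auto simp: z0_def)
        then show ?thesis using L[OF zv(1) zv(1)] by blast
      qed
    qed
  next
    assume "R2 n i \<alpha> \<beta>"
    then obtain j p ys where p: "j + 2 \<le> i" "length p = j" "length ys = i - j" "\<forall>z\<in>set ys. z \<noteq> 0"
      "\<alpha> = p @ replicate (i - j) 0" "\<beta> = p @ ys" by (auto simp: R2_def)
    have "R2 n k (\<alpha>@z0) (\<beta>@z1)"
      unfolding R2_def
      apply (rule exI[of _ j], rule exI[of _ p], rule exI[of _ "ys @ z1"])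
      using p ik by (auto simp: z0_def z1_def replicate_add[symmetric])
    then show ?thesis using L[OF zv(1) zv(2)] by blast
  next
    assume "R2 n i \<beta> \<alpha>"
    then obtain j p ys where p: "j + 2 \<le> i" "length p = j" "length ys = i - j" "\<forall>z\<in>set ys. z \<noteq> 0"
      "\<beta> = p @ replicate (i - j) 0" "\<alpha> = p @ ys" by (auto simp: R2_def)
    have "R2 n k (\<beta>@z0) (\<alpha>@z1)"
      unfolding R2_def
      apply (rule exI[of _ j], rule exI[of _ p], rule exI[of _ "ys @ z1"])
      using p ik by (auto simp: z0_def z1_def replicate_add[symmetric])
    then show ?thesis using L[OF zv(2) zv(1)] by blast
  next
    assume "R3 n i \<alpha> \<beta>"
    then obtain j p a b where p: "1 \<le> j" "j \<le> i - 1" "length p = j - 1" "a \<noteq> 0" "b \<noteq> 0" "a \<noteq> b"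
      "\<alpha> = p @ [a] @ replicate (i - j) 0" "\<beta> = p @ [b] @ replicate (i - j) 0" by (auto simp: R3_def)
    have "R3 n k (\<alpha>@z0) (\<beta>@z0)"
      unfolding R3_def
      apply (rule exI[of _ j], rule exI[of _ p], rule exI[of _ a], rule exI[of _ b])
      using p ik by (auto simp: z0_def replicate_add[symmetric])
    then show ?thesis using L[OF zv(1) zv(1)] by blast
  qed
qed

lemma R1_sym: "R1 n k x y \<Longrightarrow> R1 n k y x"
  unfolding R1_def by metis

lemma r2case:
  assumes "R2 n k x y" "1 \<le> i" "i \<le> k - 1" "take i x \<noteq> take i y"
  shows "R1 n i (take i x) (take i y) \<or> R2 n i (take i x) (take i y)"
proof -
  obtain j p ys where p: "j + 2 \<le> k" "length p = j" "length ys = k - j" "\<forall>z\<in>set ys. z \<noteq> 0"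
      "x = p @ replicate (k - j) 0" "y = p @ ys" using assms(1) by (auto simp: R2_def)
  have ji: "j < i"
  proof (rule ccontr)
    assume "\<not> j < i"
    then show False using assms(4) p by auto
  qed
  have tx: "take i x = p @ replicate (i-j) 0" using p ji assms by (simp add: take_replicate)
  have ty: "take i y = p @ take (i-j) ys" using p ji by simp
  show ?thesis
  proof (cases "j + 2 \<le> i")
    case True
    then have "R2 n i (take i x) (take i y)" unfolding R2_def
      apply (rule_tac x=j in exI, rule_tac x=p in exI, rule_tac x="take (i-j) ys" in exI)
      using p tx ty assms by (auto dest: in_set_takeD)
    then show ?thesis by blast
  next
    case False
    then have ij: "i = j + 1" using ji by simp
    obtain c cs where ys: "ys = c # cs" using p by (cases ys) auto
    have "R1 n i (take i x) (take i y)" unfolding R1_def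
      apply (rule_tac x=p in exI, rule_tac x=0 in exI, rule_tac x=c in exI)
      using p tx ty ij ys by auto
    then show ?thesis by blast
  qed
qed

lemma fwd:
  assumes n: "n \<ge> 2" and "k \<ge> 2" and i1: "1 \<le> i" and ik: "i \<le> k - 1" and h: "Q_adj n k i \<alpha> \<beta>"
  shows "H_adj n i \<alpha> \<beta>"
proof -
  obtain x y where xy: "\<alpha> \<in> Hvert n i" "\<beta> \<in> Hvert n i" "\<alpha> \<noteq> \<beta>" "x \<in> Hvert n k" "y \<in> Hvert n k"
    "take i x = \<alpha>" "take i y = \<beta>" "H_adj n k x y" using h unfolding Q_adj_def by blast
  have "R1 n k x y \<or> R2 n k x y \<or> R2 n k y x \<or> R3 n k x y" using xy by (simp add: H_adj_def)
  then have "R1 n i \<alpha> \<beta> \<or> R2 n i \<alpha> \<beta> \<or> R2 n i \<beta> \<alpha> \<or> R3 n i \<alpha> \<beta>"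
  proof (elim disjE)
    assume "R1 n k x y"
    then obtain p a b where "length p = k - 1" "x = p @ [a]" "y = p @ [b]" by (auto simp: R1_def)
    then have "take i x = take i y" using ik by simp
    then show ?thesis using xy by simp
  next
    assume "R2 n k x y"
    from r2case[OF this i1 ik] xy show ?thesis by auto
  next
    assume "R2 n k y x"
    from r2case[OF this i1 ik] xy show ?thesis by (auto dest: R1_sym)
  next
    assume "R3 n k x y"
    then obtain j p a b where p: "1 \<le> j" "j \<le> k - 1" "length p = j - 1" "a \<noteq> 0" "b \<noteq> 0" "a \<noteq> b"
      "x = p @ [a] @ replicate (k - j) 0" "y = p @ [b] @ replicate (k - j) 0" by (auto simp: R3_def)
    show ?thesis
    proof (cases "i < j")
      case True
      then have "take i x = take i y" using p by simp
      then show ?thesis using xy by simp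
    next
      case False
      show ?thesis
      proof (cases "i = j")
        case True
        have "R1 n i \<alpha> \<beta>" unfolding R1_def
          apply (rule_tac x=p in exI, rule_tac x=a in exI, rule_tac x=b in exI)
          using p True xy by auto
        then show ?thesis by blast
      next
        case F2: False
        then have ji: "j < i" using False by simp
        have tx: "\<alpha> = p @ [a] @ replicate (i-j) 0" "\<beta> = p @ [b] @ replicate (i-j) 0"
          using xy(6,7) p ji ik by (auto simp: take_replicate Suc_diff_le)
        have "R3 n i \<alpha> \<beta>" unfolding R3_def
          apply (rule_tac x=j in exI, rule_tac x=p in exI, rule_tac x=a in exI, rule_tac x=b in exI)
          using p tx ji by auto
        then show ?thesis by blast
      qed
    qed
  qed
  then show ?thesis using xy by (simp add: H_adj_def)
qed

theorem mainTheorem3: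
  fixes n k i :: nat
  assumes "n \<ge> 2" and "k \<ge> 2" and "1 \<le> i" and "i \<le> k - 1"
  shows "Q_adj n k i = H_adj n i"
  using fwd[OF assms] bwd[OF assms] by (intro ext iffI) auto

end
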